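(* Let $K$ be an imaginary quadratic field, let $N=N_0N_1^2$ and $c$ be positive integers with $(c,N)=1$, and fix an embedding $K\hookrightarrow M_2(\mathbb{Q})$ with $K\cap M_2(\mathbb{Z})=K\cap R_0(N_0)=\mathcal{O}_c$. Let $h_0\in K$ be the point of the upper half plane fixed by $K^\times$. Let $\mathfrak{a}=\mathbb{Z}+\mathbb{Z}h_0^{-1}$ and $\mathcal{N}^{-1}=\mathbb{Z}+\mathbb{Z}N_0^{-1}h_0^{-1}$. Then $\mathrm{End}(\mathfrak{a}):=\{x\in K: x\mathfrak{a}\subset\mathfrak{a}\}=\mathcal{O}_c$ and $\mathrm{End}(\mathcal{N}^{-1})=\mathcal{O}_c$.
   Context: $\mathcal{O}_c=\mathbb{Z}+c\mathcal{O}_K$; $R_0(N_0)=\{A\in M_2(\mathbb{Z}): A\equiv\begin{pmatrix}*&*\\0&*\end{pmatrix}\pmod{N_0}\}$. Here $h_0$ lies in $K$ (viewed as a subfield of $\mathbb{C}$) and $K=\mathbb{Q}+\mathbb{Q}h_0$. *)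

theory Defs
  imports "HOL-Analysis.Analysis" "HOL-Computational_Algebra.Polynomial"
begin

definition imag_quadratic_field :: "complex set \<Rightarrow> bool" where
  "imag_quadratic_field K \<longleftrightarrow>
     (\<exists>w. Im w \<noteq> 0 \<and> w\<^sup>2 \<in> \<rat> \<and> K = {of_rat a + of_rat b * w | a b. True})"

definition alg_int :: "complex \<Rightarrow> bool" where
  "alg_int x \<longleftrightarrow> (\<exists>p :: int poly. lead_coeff p = 1 \<and> poly (map_poly of_int p) x = 0)"

definition ring_of_integers :: "complex set \<Rightarrow> complex set" where
  "ring_of_integers K = {x \<in> K. alg_int x}"

definition order_c :: "complex set \<Rightarrow> int \<Rightarrow> complex set" where
  "order_c K c = {of_int n + of_int c * y | n y. y \<in> ring_of_integers K}"

definition integral_mat :: "rat^2^2 \<Rightarrow> bool" where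
  "integral_mat A \<longleftrightarrow> (\<forall>i j. A $ i $ j \<in> \<int>)"

definition in_R0 :: "int \<Rightarrow> rat^2^2 \<Rightarrow> bool" where
  "in_R0 N0 A \<longleftrightarrow> integral_mat A \<and> (\<exists>k::int. A $ 2 $ 1 = of_int (N0 * k))"

definition ring_embedding :: "complex set \<Rightarrow> (complex \<Rightarrow> rat^2^2) \<Rightarrow> bool" where
  "ring_embedding K \<phi> \<longleftrightarrow>
     \<phi> 1 = mat 1 \<and>
     (\<forall>x\<in>K. \<forall>y\<in>K. \<phi> (x + y) = \<phi> x + \<phi> y \<and> \<phi> (x * y) = \<phi> x ** \<phi> y) \<and>
     inj_on \<phi> K"

definition moebius :: "rat^2^2 \<Rightarrow> complex \<Rightarrow> complex" where
  "moebius A z = (of_rat (A$1$1) * z + of_rat (A$1$2)) / (of_rat (A$2$1) * z + of_rat (A$2$2))"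

definition End_lat :: "complex set \<Rightarrow> complex set \<Rightarrow> complex set" where
  "End_lat K L = {x \<in> K. \<forall>y\<in>L. x * y \<in> L}"

end

theory Submission imports Defs begin
lemma Im_of_rat[simp]: "Im (of_rat u :: complex) = 0" 
  by (cases u) (simp add: of_rat_rat)
lemma Re_of_rat[simp]: "Re (of_rat u :: complex) = of_rat u" 
  by (cases u) (simp add: of_rat_rat)

lemma lin_indep:
  assumes "Im g \<noteq> 0" "of_rat u * g + of_rat v = (0::complex)"
  shows "u = 0 \<and> v = 0"
proof -
  have "Im (of_rat u * g + of_rat v) = 0" using assms(2) by simp
  hence "of_rat u * Im g = 0" by simp
  hence u: "u = 0" using assms(1) by simp
  with assms(2) show ?thesis by simp
qed

lemma lat_mem:
  assumes "Im g \<noteq> 0"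
  shows "(of_rat s + of_rat t / g \<in> {of_int m + of_int n / g |m n. True}) \<longleftrightarrow> s \<in> \<int> \<and> t \<in> \<int>"
proof
  have g: "g \<noteq> 0" using assms by auto
  assume "of_rat s + of_rat t / g \<in> {of_int m + of_int n / g |m n. True}"
  then obtain m n :: int where e: "of_rat s + of_rat t / g = of_int m + of_int n / g" by auto
  have "of_rat (s - of_int m) * g + of_rat (t - of_int n) = 0"
  proof -
    have "(of_rat s + of_rat t / g) * g = (of_int m + of_int n / g) * g" using e by simp
    moreover have "(of_rat s + of_rat t / g) * g = of_rat s * g + of_rat t" using g by (simp add: distrib_right)
    moreover have "(of_int m + of_int n / g) * g = of_int m * g + of_int n" using g by (simp add: distrib_right)
    ultimately have "of_rat s * g + of_rat t = of_int m * g + of_int n" by simp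
    thus ?thesis by (simp add: of_rat_diff algebra_simps)
  qed
  from lin_indep[OF assms this] show "s \<in> \<int> \<and> t \<in> \<int>" by simp
next
  assume "s \<in> \<int> \<and> t \<in> \<int>"
  then obtain m n where "s = of_int m" "t = of_int n" by (auto elim!: Ints_cases)
  thus "of_rat s + of_rat t / g \<in> {of_int m + of_int n / g |m n. True}" by auto
qed

lemma end_lat_char:
  assumes g: "Im g \<noteq> 0" and gg: "g*g = of_rat \<alpha> * g + of_rat \<beta>" and x: "x = of_rat q + of_rat p * g"
  shows "(\<forall>y\<in>{of_int m + of_int n / g |m n. True}. x*y \<in> {of_int m + of_int n / g |m n. True})
     \<longleftrightarrow> p\<in>\<int> \<and> q\<in>\<int> \<and> q + p*\<alpha> \<in> \<int> \<and> p*\<beta> \<in> \<int>" (is "(\<forall>y\<in>?L. _) \<longleftrightarrow> _")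
proof -
  have g0: "g \<noteq> 0" using g by auto
  have e1: "x = of_rat (q + p*\<alpha>) + of_rat (p*\<beta>) / g"
  proof -
    have "x * g = of_rat q * g + of_rat p * (g*g)" unfolding x by (simp add: algebra_simps)
    also have "\<dots> = of_rat (q + p*\<alpha>) * g + of_rat (p*\<beta>)"
      unfolding gg by (simp add: of_rat_add of_rat_mult algebra_simps)
    finally have "x * g = \<dots>" .
    thus ?thesis using g0 by (simp add: field_simps)
  qed
  have e2: "x / g = of_rat p + of_rat q / g" using g0 unfolding x by (simp add: field_simps)
  show ?thesis
  proof
    assume H: "\<forall>y\<in>?L. x*y \<in> ?L"
    have "x * 1 \<in> ?L" using H by (metis (mono_tags, lifting) mem_Collect_eq of_int_0 of_int_1 div_0 add_0_right)
    hence "q + p*\<alpha> \<in> \<int> \<and> p*\<beta> \<in> \<int>" using lat_mem[OF g] e1 by simp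
    moreover have "x * (1/g) \<in> ?L" using H by (metis (mono_tags, lifting) mem_Collect_eq of_int_0 of_int_1 add_0)
    hence "p \<in> \<int> \<and> q \<in> \<int>" using lat_mem[OF g] e2 by simp
    ultimately show "p\<in>\<int> \<and> q\<in>\<int> \<and> q + p*\<alpha> \<in> \<int> \<and> p*\<beta> \<in> \<int>" by simp
  next
    assume H: "p\<in>\<int> \<and> q\<in>\<int> \<and> q + p*\<alpha> \<in> \<int> \<and> p*\<beta> \<in> \<int>"
    show "\<forall>y\<in>?L. x*y \<in> ?L"
    proof
      fix y assume "y \<in> ?L"
      then obtain m n :: int where y: "y = of_int m + of_int n / g" by auto
      have "x * y = of_int m * x + of_int n * (x / g)" unfolding y by (simp add: algebra_simps)
      also have "\<dots> = of_rat (of_int m * (q + p*\<alpha>) + of_int n * p) + of_rat (of_int m * (p*\<beta>) + of_int n * q) / g"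
        unfolding e2 by (subst e1) (simp add: of_rat_add of_rat_mult algebra_simps add_divide_distrib)
      finally have "x * y = \<dots>" .
      moreover have "of_int m * (q + p*\<alpha>) + of_int n * p \<in> \<int>" "of_int m * (p*\<beta>) + of_int n * q \<in> \<int>"
        using H by auto
      ultimately show "x * y \<in> ?L" using lat_mem[OF g] by simp
    qed
  qed
qed
lemma additive_hom:
  fixes f :: "complex \<Rightarrow> rat"
  assumes add: "\<forall>x\<in>K. \<forall>y\<in>K. f (x+y) = f x + f y" and cl: "\<forall>x\<in>K. \<forall>r. of_rat r * x \<in> K"
    and y: "y \<in> K"
  shows "f (of_rat r * y) = r * f y"
proof -
  have clz: "of_int k * z \<in> K" if "z \<in> K" for k z using cl that by (metis of_rat_of_int_eq)
  have f0: "f 0 = 0"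
  proof -
    have "0 \<in> K" using cl y by (metis mult_zero_left of_rat_0)
    thus ?thesis using add by (metis add_0 add_cancel_right_right)
  qed
  have fnat: "f (of_nat n * z) = of_nat n * f z" if z: "z \<in> K" for n z
  proof (induction n)
    case 0 then show ?case using f0 by simp
  next
    case (Suc n)
    have "of_nat (Suc n) * z = of_nat n * z + z" by (simp add: algebra_simps)
    moreover have "of_nat n * z \<in> K" using clz[OF z, of "int n"] by simp
    ultimately have "f (of_nat (Suc n) * z) = f (of_nat n * z) + f z" using add z by simp
    thus ?case using Suc by (simp add: algebra_simps)
  qed
  have fneg: "f (- z) = - f z" if z: "z \<in> K" for z
  proof -
    have "- z \<in> K" using clz[OF z, of "-1"] by simp
    hence "f (-z + z) = f (-z) + f z" using add z by blast
    thus ?thesis using f0 by simp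
  qed
  have fint: "f (of_int k * z) = of_int k * f z" if z: "z \<in> K" for k z
  proof (cases "k \<ge> 0")
    case True
    then obtain n where "k = int n" by (metis nonneg_int_cases)
    thus ?thesis using fnat[OF z] by simp
  next
    case False
    then obtain n where k: "k = - int n" by (intro that[of "nat (-k)"]) simp
    have "of_int k * z = - (of_nat n * z)" using k by simp
    moreover have "of_nat n * z \<in> K" using clz[OF z, of "int n"] by simp
    ultimately show ?thesis using fneg fnat[OF z] k by simp
  qed
  obtain k m where r: "r = Fract k m" and m: "m > 0" by (cases r) auto
  define z where "z = of_rat r * y"
  have zK: "z \<in> K" using cl y z_def by blast
  have "of_int m * z = of_int k * y"
    unfolding z_def r using m by (simp add: Fract_of_int_quotient of_rat_divide)
  hence "of_int m * f z = of_int k * f y" using fint[OF zK] fint[OF y] by metis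
  hence "f z = (of_int k / of_int m) * f y" using m by (simp add: field_simps)
  thus ?thesis unfolding z_def r by (simp add: Fract_of_int_quotient)
qed
lemma mat1_ent[simp]: "(mat 1 :: rat^2^2) $ 1 $ 1 = 1" "(mat 1 :: rat^2^2) $ 1 $ 2 = 0"
   "(mat 1 :: rat^2^2) $ 2 $ 1 = 0" "(mat 1 :: rat^2^2) $ 2 $ 2 = 1" by (simp_all add: mat_def)

lemma phi_struct:
  fixes \<phi> :: "complex \<Rightarrow> rat^2^2"
  assumes Kdef: "K = {of_rat a + of_rat b * h0 | a b. True}"
    and emb: "\<phi> 1 = mat 1" "\<forall>x\<in>K. \<forall>y\<in>K. \<phi> (x + y) = \<phi> x + \<phi> y \<and> \<phi> (x * y) = \<phi> x ** \<phi> y"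
      "inj_on \<phi> K"
    and im: "Im h0 \<noteq> 0"
    and fx: "(of_rat (\<phi> h0$1$1) * h0 + of_rat (\<phi> h0$1$2)) / (of_rat (\<phi> h0$2$1) * h0 + of_rat (\<phi> h0$2$2)) = h0"
    and gg: "h0*h0 = of_rat \<alpha> * h0 + of_rat \<beta>"
  shows "(\<forall>p q. \<phi> (of_rat q + of_rat p * h0) $1$1 = q + p*\<alpha> \<and> \<phi> (of_rat q + of_rat p * h0) $1$2 = p*\<beta>
            \<and> \<phi> (of_rat q + of_rat p * h0) $2$1 = p \<and> \<phi> (of_rat q + of_rat p * h0) $2$2 = q)
       \<or> (\<forall>p q. \<phi> (of_rat q + of_rat p * h0) $1$1 = q \<and> \<phi> (of_rat q + of_rat p * h0) $1$2 = - (p*\<beta>)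
            \<and> \<phi> (of_rat q + of_rat p * h0) $2$1 = - p \<and> \<phi> (of_rat q + of_rat p * h0) $2$2 = q + p*\<alpha>)"
proof -
  have memK: "of_rat a + of_rat b * h0 \<in> K" for a b using Kdef by blast
  have cl: "\<forall>x\<in>K. \<forall>r. of_rat r * x \<in> K"
  proof (intro ballI allI)
    fix x r assume "x \<in> K"
    then obtain a b where "x = of_rat a + of_rat b * h0" using Kdef by blast
    hence "of_rat r * x = of_rat (r*a) + of_rat (r*b) * h0" by (simp add: of_rat_mult algebra_simps)
    thus "of_rat r * x \<in> K" using memK by simp
  qed
  have h0K: "h0 \<in> K" using memK[of 0 1] by simp
  have oneK: "1 \<in> K" using memK[of 1 0] by simp
  have addE: "\<forall>x\<in>K. \<forall>y\<in>K. \<phi> (x+y) $ i $ j = \<phi> x $ i $ j + \<phi> y $ i $ j" for i j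
    using emb(2) by simp
  have homE: "\<phi> (of_rat r * y) $ i $ j = r * \<phi> y $ i $ j" if "y \<in> K" for r y i j
    using additive_hom[of K "\<lambda>z. \<phi> z $ i $ j", OF addE cl that] .
  have ent: "\<phi> (of_rat q + of_rat p * h0) $ i $ j = q * (mat 1::rat^2^2) $ i $ j + p * \<phi> h0 $ i $ j" for p q i j
  proof -
    have "of_rat q \<in> K" using memK[of q 0] by simp
    moreover have "of_rat p * h0 \<in> K" using cl h0K by blast
    ultimately have "\<phi> (of_rat q + of_rat p * h0) $ i $ j = \<phi> (of_rat q) $ i $ j + \<phi> (of_rat p * h0) $ i $ j"
      using addE by blast
    also have "\<phi> (of_rat q) $ i $ j = q * (mat 1::rat^2^2) $ i $ j"
      using homE[OF oneK, of q i j] emb(1) by simp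
    also have "\<phi> (of_rat p * h0) $ i $ j = p * \<phi> h0 $ i $ j" using homE[OF h0K] .
    finally show ?thesis .
  qed
  define a where "a = \<phi> h0 $1$1"
  define b where "b = \<phi> h0 $1$2"
  define c where "c = \<phi> h0 $2$1"
  define d where "d = \<phi> h0 $2$2"
  have sq: "(\<phi> h0 ** \<phi> h0) $ i $ j = \<beta> * (mat 1::rat^2^2) $ i $ j + \<alpha> * \<phi> h0 $ i $ j" for i j
  proof -
    have "\<phi> h0 ** \<phi> h0 = \<phi> (h0 * h0)" using emb(2) h0K by simp
    also have "h0 * h0 = of_rat \<beta> + of_rat \<alpha> * h0" using gg by simp
    finally show ?thesis using ent by simp
  qed
  have e11: "a*a + b*c = \<beta> + \<alpha>*a" using sq[of 1 1] unfolding a_def b_def c_def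
    by (simp add: matrix_matrix_mult_def sum_2)
  have e21: "c*a + d*c = \<alpha>*c" using sq[of 2 1] unfolding a_def c_def d_def
    by (simp add: matrix_matrix_mult_def sum_2)
  have h0nz: "h0 \<noteq> 0" using im by auto
  have den: "of_rat c * h0 + of_rat d \<noteq> 0"
  proof
    assume "of_rat c * h0 + of_rat d = 0"
    hence "h0 = 0" using fx unfolding a_def b_def c_def d_def by simp
    thus False using h0nz by simp
  qed
  have "of_rat a * h0 + of_rat b = h0 * (of_rat c * h0 + of_rat d)"
    using fx den unfolding a_def b_def c_def d_def by (simp add: divide_eq_eq mult.commute)
  also have "\<dots> = of_rat c * (h0*h0) + of_rat d * h0" by (simp add: algebra_simps)
  also have "\<dots> = of_rat (c*\<alpha> + d) * h0 + of_rat (c*\<beta>)" unfolding gg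
    by (simp add: of_rat_add of_rat_mult algebra_simps)
  finally have "of_rat (a - c*\<alpha> - d) * h0 + of_rat (b - c*\<beta>) = 0"
    by (simp add: of_rat_add of_rat_diff algebra_simps)
  from lin_indep[OF im this] have f1: "a - d = c*\<alpha>" and f2: "b = c*\<beta>" by simp_all
  have c0: "c \<noteq> 0"
  proof
    assume c: "c = 0"
    have E: "\<phi> (of_rat a) $ i $ j = a * (mat 1::rat^2^2) $ i $ j" for i j using ent[of a 0 i j] by simp
    have "\<phi> h0 = \<phi> (of_rat a)"
      unfolding vec_eq_iff forall_2 E using c f1 f2 unfolding a_def b_def c_def d_def by simp
    moreover have "of_rat a \<in> K" using memK[of a 0] by simp
    ultimately have "h0 = of_rat a" using emb(3) h0K unfolding inj_on_def by blast
    hence "Im h0 = 0" by simp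
    thus False using im by simp
  qed
  have f3: "\<alpha> = a + d"
  proof -
    have "c * (a + d - \<alpha>) = 0" using e21 by (simp add: algebra_simps)
    thus ?thesis using c0 by simp
  qed
  have disc: "4*\<beta> + \<alpha>^2 \<noteq> 0"
  proof
    assume H: "4*\<beta> + \<alpha>^2 = 0"
    have "Im (h0*h0) = Im (of_rat \<alpha> * h0 + of_rat \<beta>)" using gg by simp
    hence "2 * Re h0 * Im h0 = of_rat \<alpha> * Im h0" by simp
    hence u: "Re h0 = of_rat \<alpha> / 2" using im by (simp add: field_simps)
    have "Re (h0*h0) = Re (of_rat \<alpha> * h0 + of_rat \<beta>)" using gg by simp
    hence "Re h0 * Re h0 - Im h0 * Im h0 = of_rat \<alpha> * Re h0 + of_rat \<beta>" by simp
    hence "- (Im h0 * Im h0) = of_rat \<alpha> * of_rat \<alpha> / 4 + of_rat \<beta>" unfolding u by (simp add: field_simps)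
    moreover have "real_of_rat \<alpha> * of_rat \<alpha> / 4 + of_rat \<beta> = of_rat ((4*\<beta> + \<alpha>^2)/4)"
      by (simp add: of_rat_add of_rat_mult of_rat_divide power2_eq_square field_simps)
    ultimately have "Im h0 * Im h0 = 0" using H by simp
    thus False using im by simp
  qed
  have "(1 - c^2) * (4*\<beta> + \<alpha>^2) = 0"
    using e11 f1 f2 f3 by algebra
  hence "c^2 = 1" using disc by simp
  hence "c = 1 \<or> c = -1" by (simp add: power2_eq_1_iff)
  thus ?thesis
  proof
    assume c: "c = 1"
    hence "a = \<alpha>" "d = 0" "b = \<beta>" using f1 f2 f3 by simp_all
    thus ?thesis using c ent unfolding a_def b_def c_def d_def by (simp add: algebra_simps)
  next
    assume c: "c = -1"
    hence "a = 0" "d = \<alpha>" "b = -\<beta>" using f1 f2 f3 by simp_all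
    thus ?thesis using c ent unfolding a_def b_def c_def d_def by (simp add: algebra_simps)
  qed
qed
lemma alg_int_quad:
  assumes "x*x - of_int t * x + of_int n = (0::complex)"
  shows "alg_int x"
  unfolding alg_int_def
proof (intro exI conjI)
  show "lead_coeff [:n, -t, 1:] = 1" by simp
  show "poly (map_poly of_int [:n, -t, 1:]) x = 0" using assms by (simp add: map_poly_pCons algebra_simps)
qed

lemma neg_mult_ex: "(\<exists>k. - p = (of_int (N0*k)::rat)) \<longleftrightarrow> (\<exists>k. p = of_int (N0*k))"
proof
  assume "\<exists>k. - p = (of_int (N0*k)::rat)"
  then obtain k where "- p = of_int (N0*k)" by blast
  hence "p = of_int (N0 * (-k))" by (simp add: algebra_simps)
  thus "\<exists>k. p = of_int (N0*k)" by blast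
next
  assume "\<exists>k. p = (of_int (N0*k)::rat)"
  then obtain k where "p = of_int (N0*k)" by blast
  hence "- p = of_int (N0 * (-k))" by (simp add: algebra_simps)
  thus "\<exists>k. - p = of_int (N0*k)" by blast
qed

theorem lemma2p4:
  fixes K :: "complex set" and \<phi> :: "complex \<Rightarrow> rat^2^2"
    and N N0 N1 c :: int and h0 :: complex
  assumes "imag_quadratic_field K"
    and "N0 > 0" and "N1 > 0" and "N = N0 * N1\<^sup>2" and "c > 0" and "coprime c N"
    and "ring_embedding K \<phi>"
    and "{x \<in> K. integral_mat (\<phi> x)} = order_c K c"
    and "{x \<in> K. in_R0 N0 (\<phi> x)} = order_c K c"
    and "Im h0 > 0"
    and "\<forall>x\<in>K - {0}. moebius (\<phi> x) h0 = h0"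
    and "h0 \<in> K"
    and "K = {of_rat a + of_rat b * h0 | a b. True}"
  shows "End_lat K {of_int m + of_int n / h0 | m n. True} = order_c K c
       \<and> End_lat K {of_int m + of_int n / (of_int N0 * h0) | m n. True} = order_c K c"
proof -
  obtain w where w: "Im w \<noteq> 0" "w^2 \<in> \<rat>" "K = {of_rat a + of_rat b * w |a b. True}"
    using assms(1) unfolding imag_quadratic_field_def by blast
  obtain a0 b0 where h0w: "h0 = of_rat a0 + of_rat b0 * w" using assms(12) w(3) by blast
  obtain r where r: "w^2 = of_rat r" using w(2) by (auto elim: Rats_cases)
  define \<alpha> where "\<alpha> = 2*a0"
  define \<beta> where "\<beta> = b0^2 * r - a0^2"
  have gg: "h0*h0 = of_rat \<alpha> * h0 + of_rat \<beta>"
  proof -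
    have "h0*h0 = of_rat a0 * of_rat a0 + 2 * of_rat a0 * of_rat b0 * w + of_rat b0 * of_rat b0 * w^2"
      unfolding h0w by (simp add: power2_eq_square algebra_simps)
    also have "\<dots> = of_rat \<alpha> * h0 + of_rat \<beta>" unfolding r h0w \<alpha>_def \<beta>_def
      by (simp add: of_rat_add of_rat_mult of_rat_diff power2_eq_square algebra_simps)
    finally show ?thesis .
  qed
  have im: "Im h0 \<noteq> 0" using assms(10) by simp
  have h0nz: "h0 \<noteq> 0" using im by auto
  have emb: "\<phi> 1 = mat 1" "\<forall>x\<in>K. \<forall>y\<in>K. \<phi> (x + y) = \<phi> x + \<phi> y \<and> \<phi> (x * y) = \<phi> x ** \<phi> y" "inj_on \<phi> K"
    using assms(7) unfolding ring_embedding_def by auto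
  have fx: "(of_rat (\<phi> h0$1$1) * h0 + of_rat (\<phi> h0$1$2)) / (of_rat (\<phi> h0$2$1) * h0 + of_rat (\<phi> h0$2$2)) = h0"
    using assms(11) assms(12) h0nz by (auto simp: moebius_def)
  note D = phi_struct[OF assms(13) emb im fx gg]
  have intc: "integral_mat (\<phi> (of_rat q + of_rat p * h0)) \<longleftrightarrow> p\<in>\<int> \<and> q\<in>\<int> \<and> q + p*\<alpha> \<in>\<int> \<and> p*\<beta>\<in>\<int>" for p q
    using D unfolding integral_mat_def forall_2 by (elim disjE) (auto simp: minus_in_Ints_iff)
  have r0c: "in_R0 N0 (\<phi> (of_rat q + of_rat p * h0)) \<longleftrightarrow>
      (p\<in>\<int> \<and> q\<in>\<int> \<and> q + p*\<alpha> \<in>\<int> \<and> p*\<beta>\<in>\<int>) \<and> (\<exists>k. p = of_int (N0*k))" for p q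
  proof -
    have e: "\<phi> (of_rat q + of_rat p * h0) $2$1 = p \<or> \<phi> (of_rat q + of_rat p * h0) $2$1 = -p"
      using D by blast
    have "(\<exists>k. \<phi> (of_rat q + of_rat p * h0) $2$1 = of_int (N0*k)) \<longleftrightarrow> (\<exists>k. p = of_int (N0*k))"
      using e neg_mult_ex[of p N0] by metis
    thus ?thesis unfolding in_R0_def intc by blast
  qed
  have rep: "\<exists>q p. x = of_rat q + of_rat p * h0" if "x \<in> K" for x using assms(13) that by blast
  define L1 where "L1 = {of_int m + of_int n / h0 | m n. True}"
  define g where "g = of_int N0 * h0"
  define L2 where "L2 = {of_int m + of_int n / g | m n. True}"
  have P1: "End_lat K L1 = {x\<in>K. integral_mat (\<phi> x)}"
    unfolding End_lat_def
  proof (rule Collect_cong, rule conj_cong, rule refl)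
    fix x assume "x \<in> K"
    then obtain q p where x: "x = of_rat q + of_rat p * h0" using rep by blast
    show "(\<forall>y\<in>L1. x * y \<in> L1) = integral_mat (\<phi> x)"
      by (simp only: L1_def end_lat_char[OF im gg x]) (simp only: x intc)
  qed
  have N0nz: "N0 \<noteq> 0" using assms(2) by simp
  have img: "Im g \<noteq> 0" using im N0nz unfolding g_def by simp
  have ggg: "g*g = of_rat (of_int N0 * \<alpha>) * g + of_rat (of_int N0 ^ 2 * \<beta>)"
  proof -
    have "g*g = of_int N0 * of_int N0 * (h0*h0)" unfolding g_def by (simp only: ac_simps)
    also have "\<dots> = of_int N0 * of_int N0 * (of_rat \<alpha> * h0 + of_rat \<beta>)" unfolding gg ..
    also have "\<dots> = of_rat (of_int N0 * \<alpha>) * g + of_rat (of_int N0 ^ 2 * \<beta>)"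
      unfolding g_def of_rat_mult of_rat_power of_rat_of_int_eq power2_eq_square by algebra
    finally show ?thesis .
  qed
  have cN0: "coprime c N0" using assms(4,6) by simp
  obtain u v where uv: "u * c + v * N0 = 1"
    using bezout_int[of c N0] cN0 by (auto simp: coprime_iff_gcd_eq_1)
  have P2: "End_lat K L2 = {x\<in>K. in_R0 N0 (\<phi> x)}"
    unfolding End_lat_def
  proof (rule Collect_cong, rule conj_cong, rule refl)
    fix x assume xK: "x \<in> K"
    then obtain q p where x: "x = of_rat q + of_rat p * h0" using rep by blast
    have x2: "x = of_rat q + of_rat (p / of_int N0) * g"
      unfolding x g_def using N0nz by (simp add: of_rat_divide)
    have s1: "q + p / of_int N0 * (of_int N0 * \<alpha>) = q + p * \<alpha>" using N0nz by simp
    have s2: "p / of_int N0 * (of_int N0 ^ 2 * \<beta>) = of_int N0 * (p * \<beta>)"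
      using N0nz by (simp add: power2_eq_square)
    have "(\<forall>y\<in>L2. x * y \<in> L2) \<longleftrightarrow> p / of_int N0 \<in> \<int> \<and> q \<in> \<int> \<and> q + p*\<alpha> \<in> \<int> \<and> of_int N0 * (p * \<beta>) \<in> \<int>"
      by (simp only: L2_def end_lat_char[OF img ggg x2]) (simp only: s1 s2)
    also have "\<dots> \<longleftrightarrow> in_R0 N0 (\<phi> x)"
    proof
      assume H: "p / of_int N0 \<in> \<int> \<and> q \<in> \<int> \<and> q + p*\<alpha> \<in> \<int> \<and> of_int N0 * (p * \<beta>) \<in> \<int>"
      then obtain k where k: "p / of_int N0 = of_int k" by (auto elim: Ints_cases)
      have pk: "p = of_int (N0 * k)" using k N0nz by (simp add: field_simps)
      obtain Q where Q: "q = of_int Q" using H by (auto elim: Ints_cases)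
      obtain A where A: "q + p*\<alpha> = of_int A" using H by (auto elim: Ints_cases)
      obtain B where B: "of_int N0 * (p * \<beta>) = of_int B" using H by (auto elim: Ints_cases)
      have quad: "x*x - of_rat (q + (q + p*\<alpha>)) * x + of_rat (q * (q + p*\<alpha>) - p * p * \<beta>)
          = of_rat p * of_rat p * (h0*h0 - of_rat \<alpha> * h0 - of_rat \<beta>)"
        unfolding x of_rat_add of_rat_mult of_rat_diff by algebra
      also have "\<dots> = 0" using gg by simp
      finally have quad0: "x*x - of_rat (q + (q + p*\<alpha>)) * x + of_rat (q * (q + p*\<alpha>) - p * p * \<beta>) = 0" .
      have t1: "q + (q + p*\<alpha>) = of_int (Q + A)" using A Q by simp
      have kk: "p * p * \<beta> = of_int k * (of_int N0 * (p * \<beta>))" using pk by (simp add: ac_simps)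
      have t2: "q * (q + p*\<alpha>) - p * p * \<beta> = of_int (Q * A - k * B)"
        unfolding kk B using A Q by simp
      have "x*x - of_int (Q + A) * x + of_int (Q * A - k * B) = 0"
        using quad0 unfolding t1 t2 of_rat_of_int_eq .
      hence "alg_int x" by (rule alg_int_quad)
      hence "x \<in> ring_of_integers K" using xK unfolding ring_of_integers_def by simp
      hence "of_int 0 + of_int c * x \<in> order_c K c" unfolding order_c_def by blast
      hence "of_int c * x \<in> {x \<in> K. in_R0 N0 (\<phi> x)}" using assms(9) by simp
      moreover have "of_int c * x = of_rat (of_int c * q) + of_rat (of_int c * p) * h0"
        unfolding x by (simp add: of_rat_mult algebra_simps)
      ultimately have "in_R0 N0 (\<phi> (of_rat (of_int c * q) + of_rat (of_int c * p) * h0))" by simp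
      hence "of_int c * p * \<beta> \<in> \<int>" using r0c by simp
      then obtain C where C: "of_int c * p * \<beta> = of_int C" by (auto elim: Ints_cases)
      have "p * \<beta> = of_int (u * c + v * N0) * (p * \<beta>)" using uv by simp
      also have "\<dots> = of_int u * (of_int c * p * \<beta>) + of_int v * (of_int N0 * (p * \<beta>))"
        by (simp add: algebra_simps)
      also have "\<dots> = of_int (u * C + v * B)" unfolding C B by simp
      finally have pb: "p * \<beta> \<in> \<int>" by simp
      show "in_R0 N0 (\<phi> x)" unfolding x r0c using H pb pk by auto
    next
      assume "in_R0 N0 (\<phi> x)"
      hence H: "p\<in>\<int> \<and> q\<in>\<int> \<and> q + p*\<alpha> \<in>\<int> \<and> p*\<beta>\<in>\<int>" and "\<exists>k. p = of_int (N0*k)"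
        unfolding x r0c by auto
      then obtain k where "p = of_int (N0*k)" by blast
      hence "p / of_int N0 = of_int k" using N0nz by simp
      thus "p / of_int N0 \<in> \<int> \<and> q \<in> \<int> \<and> q + p*\<alpha> \<in> \<int> \<and> of_int N0 * (p * \<beta>) \<in> \<int>"
        using H by auto
    qed
    finally show "(\<forall>y\<in>L2. x * y \<in> L2) = in_R0 N0 (\<phi> x)" .
  qed
  show ?thesis using P1 P2 assms(8,9) unfolding L1_def L2_def g_def by simp
qed

end
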